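(* Let $g:\mathbb{R}^n\to\mathbb{R}$ be a convex, continuously differentiable function and let $f_d:\mathbb{R}^n\to\mathbb{R}^n$ be continuously differentiable such that $x\mapsto g(f_d(x))$ is concave. Then the optimization problem $$\max_{\alpha\ge 0}\ \min_{x\in\mathbb{R}^n}\ \{\alpha g(x)-g(f_d(x))\}$$ is equivalent to the nonlinear optimization problem $$\max_{x\in\mathbb{R}^n,\ \alpha\in\mathbb{R}}\ \{\alpha g(x)-g(f_d(x)) : \alpha\nabla_x g(x)-\nabla_x\big(g(f_d(x))\big)=0,\ \alpha\ge 0\}.$$ *)

theory Defs
  imports "HOL-Analysis.Analysis"
begin

definition cont_diff1 :: "('a::euclidean_space \<Rightarrow> 'b::real_normed_vector) \<Rightarrow> bool" where
  "cont_diff1 f \<longleftrightarrow> (\<exists>f'. (\<forall>x. (f has_derivative blinfun_apply (f' x)) (at x))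
                         \<and> continuous_on UNIV f')"

definition grad :: "('a::real_inner \<Rightarrow> real) \<Rightarrow> 'a \<Rightarrow> 'a" where
  "grad f x = (SOME D. GDERIV f x :> D)"

end

theory Submission
  imports Defs
begin

lemma gderiv_exists:
  fixes f :: "'a::euclidean_space \<Rightarrow> real"
  assumes "(f has_derivative L) (at x)"
  shows "GDERIV f x :> (\<Sum>b\<in>Basis. L b *\<^sub>R b)"
proof -
  interpret L: bounded_linear L using assms by (rule has_derivative_bounded_linear)
  have "L h = inner h (\<Sum>b\<in>Basis. L b *\<^sub>R b)" for h
  proof -
    have "L h = L (\<Sum>b\<in>Basis. inner h b *\<^sub>R b)" by (simp add: euclidean_representation)
    also have "\<dots> = (\<Sum>b\<in>Basis. inner h b * L b)" by (simp add: L.sum L.scaleR)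
    also have "\<dots> = inner h (\<Sum>b\<in>Basis. L b *\<^sub>R b)" by (simp add: inner_sum_right mult.commute)
    finally show ?thesis .
  qed
  then have eq: "L = (\<lambda>h. inner h (\<Sum>b\<in>Basis. L b *\<^sub>R b))" by (rule ext)
  show ?thesis unfolding gderiv_def
    by (rule back_subst[where P="\<lambda>M. (f has_derivative M) (at x)", OF assms eq])
qed

lemma grad_works:
  fixes f :: "'a::euclidean_space \<Rightarrow> real"
  assumes "(f has_derivative L) (at x)"
  shows "GDERIV f x :> grad f x" and "L = (\<lambda>h. inner h (grad f x))"
proof -
  show g: "GDERIV f x :> grad f x"
    unfolding grad_def using gderiv_exists[OF assms] by (rule someI)
  then have "(f has_derivative (\<lambda>h. inner h (grad f x))) (at x)" by (simp add: gderiv_def)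
  from has_derivative_unique[OF assms this] show "L = (\<lambda>h. inner h (grad f x))" .
qed

lemma convex_min_iff:
  fixes h :: "'a::euclidean_space \<Rightarrow> real"
  assumes cv: "convex_on UNIV h" and d: "(h has_derivative L) (at x)"
  shows "(\<forall>y. h x \<le> h y) \<longleftrightarrow> L = (\<lambda>v. 0)"
proof
  assume "\<forall>y. h x \<le> h y"
  then show "L = (\<lambda>v. 0)"
    using differential_zero_maxmin[of x UNIV h L] d by auto
next
  assume L0: "L = (\<lambda>v. 0)"
  show "\<forall>y. h x \<le> h y"
  proof
    fix y
    define e where "e = y - x"
    define \<phi> where "\<phi> t = h (x + t *\<^sub>R e)" for t :: real
    have "FDERIV (\<lambda>r. x + r *\<^sub>R e) 0 :> (\<lambda>r. r *\<^sub>R e)"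
      by (intro derivative_eq_intros) auto
    then have "FDERIV (\<lambda>r. h (x + r *\<^sub>R e)) 0 :> (\<lambda>k. L (k *\<^sub>R e))"
      by (rule has_derivative_compose, simp add: d)
    then have der: "(\<phi> has_field_derivative 0) (at 0)"
    proof -
      have z: "(*) (0::real) = (\<lambda>k. 0)" by auto
      show ?thesis using \<open>FDERIV (\<lambda>r. h (x + r *\<^sub>R e)) 0 :> (\<lambda>k. L (k *\<^sub>R e))\<close>
        unfolding has_field_derivative_def \<phi>_def L0 z by simp
    qed
    have cphi: "convex_on UNIV \<phi>"
      unfolding convex_on_def
    proof (intro conjI ballI allI impI)
      fix a b u v :: real assume uv: "0 \<le> u" "0 \<le> v" "u + v = 1"
      have u1: "1 - v = u" using uv(3) by simp
      have "x + (u * a + v * b) *\<^sub>R e = u *\<^sub>R (x + a *\<^sub>R e) + v *\<^sub>R (x + b *\<^sub>R e)"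
      proof -
        have "x + (u * a + v * b) *\<^sub>R e = (u + v) *\<^sub>R x + (u * a + v * b) *\<^sub>R e"
          using uv(3) by simp
        also have "\<dots> = u *\<^sub>R (x + a *\<^sub>R e) + v *\<^sub>R (x + b *\<^sub>R e)"
          by (simp add: algebra_simps)
        finally show ?thesis .
      qed
      then show "\<phi> (u *\<^sub>R a + v *\<^sub>R b) \<le> u * \<phi> a + v * \<phi> b"
        unfolding \<phi>_def using convex_onD[OF cv, of v "x + a *\<^sub>R e" "x + b *\<^sub>R e"] uv
        by (simp add: u1)
    qed simp
    have "\<phi> 1 - \<phi> 0 \<ge> 0 * (1 - 0)"
      by (rule convex_on_imp_above_tangent[OF cphi]) (use der in auto)
    then show "h x \<le> h y" unfolding \<phi>_def e_def by simp
  qed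
qed

theorem theorem7:
  fixes g :: "real ^ 'n \<Rightarrow> real" and fd :: "real ^ 'n \<Rightarrow> real ^ 'n"
  assumes "convex_on UNIV g" and "cont_diff1 g"
    and "cont_diff1 fd"
    and "concave_on UNIV (\<lambda>x. g (fd x))"
  shows "(\<forall>\<alpha> x. \<alpha> \<ge> 0 \<longrightarrow>
            ((\<forall>y. \<alpha> * g x - g (fd x) \<le> \<alpha> * g y - g (fd y)) \<longleftrightarrow>
             \<alpha> *\<^sub>R grad g x - grad (\<lambda>z. g (fd z)) x = 0))
    \<and> (SUP p \<in> {(x, \<alpha>). \<alpha> \<ge> 0 \<and> (\<forall>y. \<alpha> * g x - g (fd x) \<le> \<alpha> * g y - g (fd y))}.
          ereal (snd p * g (fst p) - g (fd (fst p))))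
      = (SUP p \<in> {(x, \<alpha>). \<alpha> \<ge> 0 \<and> \<alpha> *\<^sub>R grad g x - grad (\<lambda>z. g (fd z)) x = 0}.
          ereal (snd p * g (fst p) - g (fd (fst p))))"
proof -
  obtain g' where g': "\<And>x. (g has_derivative blinfun_apply (g' x)) (at x)"
    using assms(2) unfolding cont_diff1_def by blast
  obtain f' where f': "\<And>x. (fd has_derivative blinfun_apply (f' x)) (at x)"
    using assms(3) unfolding cont_diff1_def by blast
  have gc: "((\<lambda>z. g (fd z)) has_derivative (\<lambda>v. g' (fd x) (f' x v))) (at x)" for x
    using has_derivative_compose[OF f' g'] by (simp add: o_def)
  have key: "(\<forall>y. \<alpha> * g x - g (fd x) \<le> \<alpha> * g y - g (fd y)) \<longleftrightarrow>
             \<alpha> *\<^sub>R grad g x - grad (\<lambda>z. g (fd z)) x = 0" if a: "\<alpha> \<ge> 0" for \<alpha> x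
  proof -
    define h where "h y = \<alpha> * g y - g (fd y)" for y
    have cv: "convex_on UNIV h"
      unfolding h_def
      by (rule convex_on_diff[OF convex_on_cmul[OF a assms(1)] assms(4)])
    have D1: "(g has_derivative (\<lambda>v. inner v (grad g x))) (at x)"
      using grad_works(1)[OF g'] by (simp add: gderiv_def)
    have D2: "((\<lambda>z. g (fd z)) has_derivative (\<lambda>v. inner v (grad (\<lambda>z. g (fd z)) x))) (at x)"
      using grad_works(1)[OF gc] by (simp add: gderiv_def)
    have d: "(h has_derivative (\<lambda>v. inner v (\<alpha> *\<^sub>R grad g x - grad (\<lambda>z. g (fd z)) x))) (at x)"
    proof -
      have "(h has_derivative (\<lambda>v. \<alpha> * inner v (grad g x) - inner v (grad (\<lambda>z. g (fd z)) x))) (at x)"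
        unfolding h_def by (rule has_derivative_diff[OF has_derivative_mult_right[OF D1] D2])
      then show ?thesis by (simp add: inner_diff_right)
    qed
    have "(\<forall>y. h x \<le> h y) \<longleftrightarrow> (\<lambda>v. inner v (\<alpha> *\<^sub>R grad g x - grad (\<lambda>z. g (fd z)) x)) = (\<lambda>v. 0)"
      by (rule convex_min_iff[OF cv d])
    also have "\<dots> \<longleftrightarrow> \<alpha> *\<^sub>R grad g x - grad (\<lambda>z. g (fd z)) x = 0"
    proof
      assume "(\<lambda>v. inner v (\<alpha> *\<^sub>R grad g x - grad (\<lambda>z. g (fd z)) x)) = (\<lambda>v. 0)"
      from fun_cong[OF this, of "\<alpha> *\<^sub>R grad g x - grad (\<lambda>z. g (fd z)) x"]
      show "\<alpha> *\<^sub>R grad g x - grad (\<lambda>z. g (fd z)) x = 0" by (simp only: inner_eq_zero_iff)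
    qed simp
    finally show ?thesis unfolding h_def .
  qed
  have sets: "{(x, \<alpha>). \<alpha> \<ge> 0 \<and> (\<forall>y. \<alpha> * g x - g (fd x) \<le> \<alpha> * g y - g (fd y))}
      = {(x, \<alpha>). \<alpha> \<ge> 0 \<and> \<alpha> *\<^sub>R grad g x - grad (\<lambda>z. g (fd z)) x = 0}"
  proof (rule Collect_cong)
    fix p :: "(real ^ 'n) \<times> real"
    obtain x a where p: "p = (x, a)" by (cases p)
    show "(case p of (x, \<alpha>) \<Rightarrow> \<alpha> \<ge> 0 \<and> (\<forall>y. \<alpha> * g x - g (fd x) \<le> \<alpha> * g y - g (fd y)))
      = (case p of (x, \<alpha>) \<Rightarrow> \<alpha> \<ge> 0 \<and> \<alpha> *\<^sub>R grad g x - grad (\<lambda>z. g (fd z)) x = 0)"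
      unfolding p prod.case using key[of a x] by blast
  qed
  show ?thesis
  proof (rule conjI)
    show "\<forall>\<alpha> x. \<alpha> \<ge> 0 \<longrightarrow>
            ((\<forall>y. \<alpha> * g x - g (fd x) \<le> \<alpha> * g y - g (fd y)) \<longleftrightarrow>
             \<alpha> *\<^sub>R grad g x - grad (\<lambda>z. g (fd z)) x = 0)" 
    proof (intro allI impI)
      fix \<alpha> :: real and x :: "real ^ 'n" assume "\<alpha> \<ge> 0" then show "((\<forall>y. \<alpha> * g x - g (fd x) \<le> \<alpha> * g y - g (fd y)) \<longleftrightarrow>
             \<alpha> *\<^sub>R grad g x - grad (\<lambda>z. g (fd z)) x = 0)" by (rule key)
    qed
  qed (simp only: sets)
qed

end
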